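(* Let $G$ be a connected finite simple undirected graph with vertex set $V_G$ (with $|V_G|\ge 2$) and maximum degree $d_G$. Let $W:V_G\to\mathbb{R}$ be a potential, let $\psi$ be the ground state of $H_{G,W}$ (chosen with $\psi(x)>0$ for all $x$), and let $\gamma$ be the gap between the smallest and second-smallest eigenvalues of $H_{G,W}$. If $\psi$ is single-peaked, then $$\gamma\ge\frac{1}{2(|W|+d_G)|V_G|^2},\qquad\text{where } |W|=\max_{x\in V_G}W(x)-\min_{x\in V_G}W(x).$$
   Context: For a finite simple undirected graph $G$ with vertex set $V_G$, let $\mathcal{H}_G$ be the complex Hilbert space with orthonormal basis $\{|x\rangle : x\in V_G\}$. The graph Laplacian is $L_G=\sum_{x} d_x |x\rangle\langle x| - \sum_{x\sim y}|x\rangle\langle y|$, where $d_x$ is the degree of $x$ and the second sum runs over ordered pairs of adjacent vertices. For a potential $W:V_G\to\mathbb{R}$, $H_{G,W}=L_G+\sum_{x} W(x)|x\rangle\langle x|$. By the Perron–Frobenius theorem, for connected $G$ the ground state of $H_{G,W}$ is nondegenerate and can be written $\sum_x\psi(x)|x\rangle$ with $\psi(x)>0$ for all $x$. The function $\psi$ has a local maximum at $x$ if $\psi(x)\ge\psi(y)$ for every neighbor $y$ of $x$. The ground state $\psi$ is called single-peaked if the set of local maxima of $\psi$ forms a connected set of vertices in $G$ (i.e. induces a connected subgraph). *)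

theory Defs
  imports Complex_Main
begin

definition simple_graph :: "'a set \<Rightarrow> ('a \<Rightarrow> 'a \<Rightarrow> bool) \<Rightarrow> bool" where
  "simple_graph V E \<longleftrightarrow> finite V \<and> (\<forall>x y. E x y \<longrightarrow> x \<in> V \<and> y \<in> V)
     \<and> (\<forall>x y. E x y \<longrightarrow> E y x) \<and> (\<forall>x. \<not> E x x)"

definition induces_connected :: "('a \<Rightarrow> 'a \<Rightarrow> bool) \<Rightarrow> 'a set \<Rightarrow> bool" where
  "induces_connected E S \<longleftrightarrow>
     (\<forall>x\<in>S. \<forall>y\<in>S. (\<lambda>u v. u \<in> S \<and> v \<in> S \<and> E u v)\<^sup>*\<^sup>* x y)"

definition graph_connected :: "'a set \<Rightarrow> ('a \<Rightarrow> 'a \<Rightarrow> bool) \<Rightarrow> bool" where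
  "graph_connected V E \<longleftrightarrow> induces_connected E V"

definition degree :: "'a set \<Rightarrow> ('a \<Rightarrow> 'a \<Rightarrow> bool) \<Rightarrow> 'a \<Rightarrow> nat" where
  "degree V E x = card {y \<in> V. E x y}"

definition max_degree :: "'a set \<Rightarrow> ('a \<Rightarrow> 'a \<Rightarrow> bool) \<Rightarrow> nat" where
  "max_degree V E = Max (degree V E ` V)"

text \<open>Matrix entries of H_{G,W} = L_G + W in the basis |x>, x in V.\<close>
definition hamiltonian :: "'a set \<Rightarrow> ('a \<Rightarrow> 'a \<Rightarrow> bool) \<Rightarrow> ('a \<Rightarrow> real) \<Rightarrow> 'a \<Rightarrow> 'a \<Rightarrow> real" where
  "hamiltonian V E W x y =
     (if x = y then real (degree V E x) + W x else 0) - (if E x y then 1 else 0)"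

definition op_spectrum :: "'a set \<Rightarrow> ('a \<Rightarrow> 'a \<Rightarrow> real) \<Rightarrow> real set" where
  "op_spectrum V M = {e. \<exists>f :: 'a \<Rightarrow> complex. (\<exists>x\<in>V. f x \<noteq> 0) \<and>
      (\<forall>x\<in>V. (\<Sum>y\<in>V. complex_of_real (M x y) * f y) = complex_of_real e * f x)}"

definition ground_energy :: "'a set \<Rightarrow> ('a \<Rightarrow> 'a \<Rightarrow> real) \<Rightarrow> real" where
  "ground_energy V M = Min (op_spectrum V M)"

text \<open>Gap between smallest and second-smallest eigenvalue (the ground state being
  nondegenerate, the second-smallest eigenvalue is the least eigenvalue above the smallest).\<close>
definition spectral_gap :: "'a set \<Rightarrow> ('a \<Rightarrow> 'a \<Rightarrow> real) \<Rightarrow> real" where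
  "spectral_gap V M = Min (op_spectrum V M - {ground_energy V M}) - ground_energy V M"

definition is_local_max :: "'a set \<Rightarrow> ('a \<Rightarrow> 'a \<Rightarrow> bool) \<Rightarrow> ('a \<Rightarrow> real) \<Rightarrow> 'a \<Rightarrow> bool" where
  "is_local_max V E \<psi> x \<longleftrightarrow> x \<in> V \<and> (\<forall>y\<in>V. E x y \<longrightarrow> \<psi> y \<le> \<psi> x)"

definition single_peaked :: "'a set \<Rightarrow> ('a \<Rightarrow> 'a \<Rightarrow> bool) \<Rightarrow> ('a \<Rightarrow> real) \<Rightarrow> bool" where
  "single_peaked V E \<psi> \<longleftrightarrow> induces_connected E {x. is_local_max V E \<psi> x}"

definition potential_range :: "'a set \<Rightarrow> ('a \<Rightarrow> real) \<Rightarrow> real" where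
  "potential_range V W = Max (W ` V) - Min (W ` V)"

end

theory Submission
  imports Defs "Jordan_Normal_Form.Spectral_Radius" "Jordan_Normal_Form.Schur_Decomposition" "HOL-Library.Transitive_Closure_Table"
begin


definition mtrace :: "'b::comm_ring_1 mat \<Rightarrow> 'b" where
  "mtrace A = (\<Sum>i<dim_row A. A $$ (i,i))"

lemma mtrace_mult_comm:
  assumes "A \<in> carrier_mat n m" "B \<in> carrier_mat m n"
  shows "mtrace (A * B) = mtrace (B * A)"
proof -
  have "mtrace (A * B) = (\<Sum>i<n. \<Sum>k<m. A $$ (i,k) * B $$ (k,i))"
    using assms unfolding mtrace_def
    by (intro sum.cong refl) (auto simp: scalar_prod_def atLeast0LessThan)
  also have "\<dots> = (\<Sum>k<m. \<Sum>i<n. B $$ (k,i) * A $$ (i,k))"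
    by (subst sum.swap) (simp add: mult.commute)
  also have "\<dots> = mtrace (B * A)"
    using assms unfolding mtrace_def
    by (intro sum.cong refl) (auto simp: scalar_prod_def atLeast0LessThan)
  finally show ?thesis .
qed

lemma trace_single_eigen:
  fixes X :: "complex mat"
  assumes X: "X \<in> carrier_mat n n" and ev: "\<And>z. eigenvalue X z \<Longrightarrow> z = c"
  shows "mtrace X = of_nat n * c"
proof -
  obtain es where cp: "char_poly X = (\<Prod>a\<leftarrow>es. [:- a, 1:])" and len: "length es = n"
    using char_poly_factorized[OF X] by blast
  obtain U P Q where sd: "schur_decomposition X es = (U,P,Q)" by (cases "schur_decomposition X es") auto
  from schur_decomposition[OF X cp sd] have sw: "similar_mat_wit X U P Q" and
     ut: "upper_triangular U" and dg: "diag_mat U = es" by auto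
  from sw X have U: "U \<in> carrier_mat n n" and P: "P \<in> carrier_mat n n" and Q: "Q \<in> carrier_mat n n"
    and QP: "Q * P = 1\<^sub>m n" and XU: "X = P * U * Q"
    unfolding similar_mat_wit_def Let_def by auto
  have "mtrace X = mtrace (P * (U * Q))" using XU P U Q by (simp add: assoc_mult_mat)
  also have "\<dots> = mtrace ((U * Q) * P)" by (rule mtrace_mult_comm[OF P]) (use U Q in auto)
  also have "(U * Q) * P = U" using U Q P QP by (simp add: assoc_mult_mat)
  also have "mtrace U = sum_list es"
    unfolding dg[symmetric] diag_mat_def mtrace_def
    by (simp add: sum_list_sum_nth atLeast0LessThan)
  also have "es = replicate n c"
  proof (rule replicate_length_same[symmetric, of es c, unfolded len])
    show "\<forall>e\<in>set es. e = c"
    proof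
      fix e assume e: "e \<in> set es"
      have "poly (char_poly X) e = 0" unfolding cp poly_prod_list
        using e by (auto simp: prod_list_zero_iff)
      hence "eigenvalue X e" using eigenvalue_root_char_poly[OF X] by simp
      thus "e = c" by (rule ev)
    qed
  qed
  finally show ?thesis by (simp add: sum_list_replicate)
qed



lemma sum_reindex_idx:
  assumes "bij_betw idx {..<n} V"
  shows "(\<Sum>y\<in>V. g y) = (\<Sum>j<n. g (idx j))"
  using sum.reindex_bij_betw[OF assms, of g] by simp

lemma eig_trans:
  fixes M :: "'a \<Rightarrow> 'a \<Rightarrow> complex"
  assumes bij: "bij_betw idx {..<n} V"
  shows "eigenvalue (mat n n (\<lambda>(i,j). M (idx i) (idx j))) z \<longleftrightarrow>
     (\<exists>f. (\<exists>x\<in>V. f x \<noteq> 0) \<and> (\<forall>x\<in>V. (\<Sum>y\<in>V. M x y * f y) = z * f x))"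
    (is "eigenvalue ?X z \<longleftrightarrow> _")
proof
  assume "eigenvalue ?X z"
  then obtain v where v: "v \<in> carrier_vec n" "v \<noteq> 0\<^sub>v n" "?X *\<^sub>v v = z \<cdot>\<^sub>v v"
    unfolding eigenvalue_def eigenvector_def by auto
  define iv where "iv = the_inv_into {..<n} idx"
  have inj: "inj_on idx {..<n}" using bij bij_betw_def by blast
  have inv1: "iv (idx j) = j" if "j < n" for j
    unfolding iv_def using the_inv_into_f_f[OF inj] that by auto
  have inv2: "iv x < n" "idx (iv x) = x" if "x \<in> V" for x
    unfolding iv_def using that bij
    by (auto intro: the_inv_into_into[OF inj, of _ "{..<n}", simplified] f_the_inv_into_f_bij_betw
             simp: bij_betw_def)
  define f where "f x = v $ iv x" for x
  show "\<exists>f. (\<exists>x\<in>V. f x \<noteq> 0) \<and> (\<forall>x\<in>V. (\<Sum>y\<in>V. M x y * f y) = z * f x)"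
  proof (intro exI conjI)
    from v obtain j where j: "j < n" "v $ j \<noteq> 0" by (auto simp: vec_eq_iff)
    then show "\<exists>x\<in>V. f x \<noteq> 0" using bij inv1 unfolding f_def bij_betw_def
      by (intro bexI[of _ "idx j"]) auto
    show "\<forall>x\<in>V. (\<Sum>y\<in>V. M x y * f y) = z * f x"
    proof
      fix x assume x: "x \<in> V"
      have "(\<Sum>y\<in>V. M x y * f y) = (\<Sum>j<n. M x (idx j) * v $ j)"
        by (simp add: sum_reindex_idx[OF bij] f_def inv1)
      also have "\<dots> = (?X *\<^sub>v v) $ iv x"
        using v(1) inv2[OF x] by (simp add: scalar_prod_def atLeast0LessThan row_def)
      also have "\<dots> = z * f x" using v inv2[OF x] by (simp add: f_def)
      finally show "(\<Sum>y\<in>V. M x y * f y) = z * f x" .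
    qed
  qed
next
  assume "\<exists>f. (\<exists>x\<in>V. f x \<noteq> 0) \<and> (\<forall>x\<in>V. (\<Sum>y\<in>V. M x y * f y) = z * f x)"
  then obtain f x where fx: "x \<in> V" "f x \<noteq> 0" and eq: "\<forall>x\<in>V. (\<Sum>y\<in>V. M x y * f y) = z * f x"
    by blast
  define v where "v = vec n (\<lambda>i. f (idx i))"
  show "eigenvalue ?X z" unfolding eigenvalue_def eigenvector_def
  proof (intro exI conjI)
    show "v \<in> carrier_vec (dim_row ?X)" unfolding v_def by simp
    from fx bij obtain i where "i < n" "idx i = x" unfolding bij_betw_def by auto
    then show "v \<noteq> 0\<^sub>v (dim_row ?X)" using fx unfolding v_def by (auto simp: vec_eq_iff)
    show "?X *\<^sub>v v = z \<cdot>\<^sub>v v"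
    proof (rule eq_vecI)
      fix i assume "i < dim_vec (z \<cdot>\<^sub>v v)"
      hence i: "i < n" by (simp add: v_def)
      hence iV: "idx i \<in> V" using bij unfolding bij_betw_def by auto
      have "(?X *\<^sub>v v) $ i = (\<Sum>j<n. M (idx i) (idx j) * f (idx j))"
        using i by (simp add: v_def scalar_prod_def atLeast0LessThan row_def)
      also have "\<dots> = (\<Sum>y\<in>V. M (idx i) y * f y)" by (simp add: sum_reindex_idx[OF bij])
      also have "\<dots> = z * f (idx i)" using eq iV by auto
      finally show "(?X *\<^sub>v v) $ i = (z \<cdot>\<^sub>v v) $ i" using i by (simp add: v_def)
    qed (simp add: v_def)
  qed
qed

lemma trace_trans:
  assumes bij: "bij_betw idx {..<n} V"
  shows "mtrace (mat n n (\<lambda>(i,j). M (idx i) (idx j))) = (\<Sum>x\<in>V. M x x)"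
  by (simp add: mtrace_def sum_reindex_idx[OF bij])



lemma sum_sq_le_card:
  fixes a :: "'b \<Rightarrow> real"
  assumes "finite I"
  shows "(\<Sum>i\<in>I. a i)\<^sup>2 \<le> real (card I) * (\<Sum>i\<in>I. (a i)\<^sup>2)"
proof -
  have "0 \<le> (\<Sum>i\<in>I. \<Sum>j\<in>I. (a i - a j)\<^sup>2)" by (intro sum_nonneg) auto
  also have "\<dots> = (\<Sum>i\<in>I. \<Sum>j\<in>I. (a i)\<^sup>2 + (a j)\<^sup>2 - 2 * (a i * a j))"
    by (simp add: power2_diff mult.assoc)
  also have "\<dots> = 2 * (real (card I) * (\<Sum>i\<in>I. (a i)\<^sup>2)) - 2 * (\<Sum>i\<in>I. a i)\<^sup>2"
    by (simp add: sum_subtractf sum.distrib sum_distrib_left[symmetric] sum_distrib_right[symmetric] power2_eq_square)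
  finally show ?thesis by simp
qed

locale gs =
  fixes V :: "'a set" and E :: "'a \<Rightarrow> 'a \<Rightarrow> bool" and W :: "'a \<Rightarrow> real"
    and \<psi> :: "'a \<Rightarrow> real" and lam :: real
  assumes sg: "simple_graph V E"
    and conn: "graph_connected V E"
    and card2: "card V \<ge> 2"
    and pos: "\<forall>x\<in>V. \<psi> x > 0"
    and eig: "\<forall>x\<in>V. (\<Sum>y\<in>V. hamiltonian V E W x y * \<psi> y) = lam * \<psi> x"
    and peak: "single_peaked V E \<psi>"
begin

lemma finV: "finite V" using sg unfolding simple_graph_def by blast
lemma Esym: "E x y \<Longrightarrow> E y x" using sg unfolding simple_graph_def by blast
lemma EV: "E x y \<Longrightarrow> x \<in> V \<and> y \<in> V" using sg unfolding simple_graph_def by blast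
lemma Eirr: "\<not> E x x" using sg unfolding simple_graph_def by blast

lemma H_sym: "hamiltonian V E W x y = hamiltonian V E W y x"
  unfolding hamiltonian_def using Esym by auto

lemma H_apply_c:
  assumes "x \<in> V"
  shows "(\<Sum>y\<in>V. complex_of_real (hamiltonian V E W x y) * f y)
     = complex_of_real (real (Defs.degree V E x) + W x) * f x - (\<Sum>y\<in>V. if E x y then f y else 0)"
proof -
  have "(\<Sum>y\<in>V. complex_of_real (hamiltonian V E W x y) * f y)
      = (\<Sum>y\<in>V. (if x = y then complex_of_real (real (Defs.degree V E x) + W x) * f y else 0)
             - (if E x y then f y else 0))"
    by (intro sum.cong refl) (auto simp: hamiltonian_def algebra_simps)
  also have "\<dots> = complex_of_real (real (Defs.degree V E x) + W x) * f x - (\<Sum>y\<in>V. if E x y then f y else 0)"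
    using assms finV by (simp add: sum_subtractf)
  finally show ?thesis .
qed

lemma H_apply_r:
  assumes "x \<in> V"
  shows "(\<Sum>y\<in>V. hamiltonian V E W x y * f y)
     = (real (Defs.degree V E x) + W x) * f x - (\<Sum>y\<in>V. if E x y then f y else 0)"
proof -
  have "(\<Sum>y\<in>V. hamiltonian V E W x y * f y)
      = (\<Sum>y\<in>V. (if x = y then (real (Defs.degree V E x) + W x) * f y else 0)
             - (if E x y then f y else 0))"
    by (intro sum.cong refl) (auto simp: hamiltonian_def algebra_simps)
  also have "\<dots> = (real (Defs.degree V E x) + W x) * f x - (\<Sum>y\<in>V. if E x y then f y else 0)"
    using assms finV by (simp add: sum_subtractf)
  finally show ?thesis .
qed


definition Rm :: "real \<Rightarrow> 'a \<Rightarrow> 'a \<Rightarrow> bool" where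
  "Rm m u v \<longleftrightarrow> u \<in> V \<and> v \<in> V \<and> E u v \<and> m \<le> \<psi> u \<and> m \<le> \<psi> v"

lemma peak_path:
  assumes "(\<lambda>u v. u \<in> {x. is_local_max V E \<psi> x} \<and> v \<in> {x. is_local_max V E \<psi> x} \<and> E u v)\<^sup>*\<^sup>* a b"
    and "\<psi> a = M" and "m \<le> M"
  shows "\<psi> b = M \<and> (Rm m)\<^sup>*\<^sup>* a b"
  using assms(1)
proof (induction rule: rtranclp_induct)
  case base
  then show ?case using assms by simp
next
  case (step b c)
  have "\<psi> c \<le> \<psi> b" using step(2) EV unfolding is_local_max_def by auto
  moreover have "\<psi> b \<le> \<psi> c" using step(2) Esym EV unfolding is_local_max_def by auto
  ultimately have eqc: "\<psi> c = M" using step by auto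
  moreover have "Rm m b c" using step assms EV eqc unfolding Rm_def by auto
  ultimately show ?case using step by (meson rtranclp.rtrancl_into_rtrancl)
qed

lemma reach:
  assumes p: "p \<in> V" "\<forall>y\<in>V. \<psi> y \<le> \<psi> p"
  shows "x \<in> V \<Longrightarrow> m \<le> \<psi> x \<Longrightarrow> (Rm m)\<^sup>*\<^sup>* x p"
proof (induction "card {z\<in>V. \<psi> x < \<psi> z}" arbitrary: x rule: less_induct)
  case less
  show ?case
  proof (cases "is_local_max V E \<psi> x")
    case True
    have pl: "is_local_max V E \<psi> p" using p unfolding is_local_max_def using EV by auto
    from peak True pl have c1: "(\<lambda>u v. u \<in> {x. is_local_max V E \<psi> x} \<and> v \<in> {x. is_local_max V E \<psi> x} \<and> E u v)\<^sup>*\<^sup>* p x"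
      and c2: "(\<lambda>u v. u \<in> {x. is_local_max V E \<psi> x} \<and> v \<in> {x. is_local_max V E \<psi> x} \<and> E u v)\<^sup>*\<^sup>* x p"
      unfolding single_peaked_def induces_connected_def by auto
    from peak_path[OF c1 refl order_refl] have hx: "\<psi> x = \<psi> p" by simp
    from peak_path[OF c2 hx] less.prems hx show ?thesis by auto
  next
    case False
    then obtain y where y: "y \<in> V" "E x y" "\<psi> x < \<psi> y" using less.prems unfolding is_local_max_def by force
    have "{z\<in>V. \<psi> y < \<psi> z} \<subset> {z\<in>V. \<psi> x < \<psi> z}" using y by auto
    hence "card {z\<in>V. \<psi> y < \<psi> z} < card {z\<in>V. \<psi> x < \<psi> z}"
      by (intro psubset_card_mono) (auto intro: finite_subset[OF _ finV])
    from less.hyps[OF this y(1)] less.prems y have "(Rm m)\<^sup>*\<^sup>* y p" by auto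
    moreover have "Rm m x y" using y less.prems unfolding Rm_def by auto
    ultimately show ?thesis by (meson converse_rtranclp_into_rtranclp)
  qed
qed

definition Dv :: "('a \<Rightarrow> complex) \<Rightarrow> 'a \<Rightarrow> real" where
  "Dv g u = (\<Sum>v\<in>V. if E u v then \<psi> u * \<psi> v * (cmod (g u - g v))\<^sup>2 else 0)"

lemma term_nonneg: "u \<in> V \<Longrightarrow> v \<in> V \<Longrightarrow> 0 \<le> \<psi> u * \<psi> v * (X::real)\<^sup>2"
  using pos by (simp add: less_imp_le)

lemma Dv_nonneg: "u \<in> V \<Longrightarrow> 0 \<le> Dv g u"
  unfolding Dv_def using EV term_nonneg by (intro sum_nonneg) auto

lemma Dv_term:
  assumes "u \<in> V" "v \<in> V" "E u v"
  shows "\<psi> u * \<psi> v * (cmod (g u - g v))\<^sup>2 \<le> Dv g u"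
proof -
  have "(if E u v then \<psi> u * \<psi> v * (cmod (g u - g v))\<^sup>2 else 0)
     \<le> (\<Sum>v\<in>V. if E u v then \<psi> u * \<psi> v * (cmod (g u - g v))\<^sup>2 else 0)"
    using assms EV finV term_nonneg
    by (intro member_le_sum) auto
  thus ?thesis using assms unfolding Dv_def by simp
qed

lemma path_V: "rtrancl_path (Rm m) a xs b \<Longrightarrow> set xs \<subseteq> V"
  by (induction rule: rtrancl_path.induct) (auto simp: Rm_def)

lemma path_ineq:
  assumes "rtrancl_path (Rm m) a xs b" "distinct (a # xs)" "0 \<le> m" "a \<in> V"
  shows "m * cmod (g a - g b) \<le> (\<Sum>u\<in>set (a # xs). sqrt (Dv g u))"
  using assms
proof (induction rule: rtrancl_path.induct)
  case (base x)
  then show ?case by (simp add: Dv_nonneg)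
next
  case (step a c ys b)
  have R: "a \<in> V" "c \<in> V" "E a c" "m \<le> \<psi> a" "m \<le> \<psi> c" using step(1) unfolding Rm_def by auto
  have "m * m \<le> \<psi> a * \<psi> c" using R step by (intro mult_mono) auto
  hence "(m * cmod (g a - g c))\<^sup>2 \<le> \<psi> a * \<psi> c * (cmod (g a - g c))\<^sup>2"
    by (simp add: power_mult_distrib mult_right_mono power2_eq_square[of m])
  also have "\<dots> \<le> Dv g a" using Dv_term R by blast
  finally have e1: "m * cmod (g a - g c) \<le> sqrt (Dv g a)" by (rule real_le_rsqrt)
  have IH: "m * cmod (g c - g b) \<le> (\<Sum>u\<in>set (c # ys). sqrt (Dv g u))"
    using step R by auto
  have "cmod (g a - g b) \<le> cmod (g a - g c) + cmod (g c - g b)"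
    using norm_triangle_ineq[of "g a - g c" "g c - g b"] by simp
  hence "m * cmod (g a - g b) \<le> m * cmod (g a - g c) + m * cmod (g c - g b)"
    using step by (metis distrib_left mult_left_mono)
  also have "\<dots> \<le> sqrt (Dv g a) + (\<Sum>u\<in>set (c # ys). sqrt (Dv g u))" using e1 IH by simp
  also have "\<dots> = (\<Sum>u\<in>set (a # c # ys). sqrt (Dv g u))"
    using step(4) by (simp add: insert_absorb)
  finally show ?case .
qed

lemma point_bound:
  assumes p: "p \<in> V" "\<forall>y\<in>V. \<psi> y \<le> \<psi> p" and x: "x \<in> V"
  shows "(\<psi> x)\<^sup>2 * (cmod (g x - g p))\<^sup>2 \<le> real (card V) * (\<Sum>u\<in>V. Dv g u)"
proof -
  have "(Rm (\<psi> x))\<^sup>*\<^sup>* x p" using reach[OF p x] by simp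
  then obtain xs where "rtrancl_path (Rm (\<psi> x)) x xs p"
    by (auto simp: rtranclp_eq_rtrancl_path)
  then obtain ys where ys: "rtrancl_path (Rm (\<psi> x)) x ys p" "distinct (x # ys)"
    by (rule rtrancl_path_distinct)
  define U where "U = set (x # ys)"
  have UV: "U \<subseteq> V" using path_V[OF ys(1)] x unfolding U_def by auto
  have "\<psi> x * cmod (g x - g p) \<le> (\<Sum>u\<in>U. sqrt (Dv g u))"
    unfolding U_def using path_ineq[OF ys] x pos by auto
  moreover have "0 \<le> \<psi> x * cmod (g x - g p)" using pos x by auto
  ultimately have "(\<psi> x * cmod (g x - g p))\<^sup>2 \<le> (\<Sum>u\<in>U. sqrt (Dv g u))\<^sup>2"
    by (rule power_mono)
  also have "\<dots> \<le> real (card U) * (\<Sum>u\<in>U. (sqrt (Dv g u))\<^sup>2)"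
    by (rule sum_sq_le_card) (simp add: U_def)
  also have "(\<Sum>u\<in>U. (sqrt (Dv g u))\<^sup>2) = (\<Sum>u\<in>U. Dv g u)"
    using UV Dv_nonneg by (intro sum.cong refl) auto
  also have "\<dots> \<le> (\<Sum>u\<in>V. Dv g u)"
    using UV Dv_nonneg finV by (intro sum_mono2) auto
  hence "real (card U) * (\<Sum>u\<in>U. Dv g u) \<le> real (card V) * (\<Sum>u\<in>V. Dv g u)"
    using card_mono[OF finV UV] UV Dv_nonneg
    by (intro mult_mono) (auto intro: sum_nonneg)
  finally show ?thesis by (simp add: power_mult_distrib)
qed


lemma sum_sq_shift:
  fixes a b :: "'a \<Rightarrow> real"
  assumes "(\<Sum>x\<in>V. b x * a x) = 0"
  shows "(\<Sum>x\<in>V. (a x)\<^sup>2) \<le> (\<Sum>x\<in>V. (a x - b x * r)\<^sup>2)"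
proof -
  have "(\<Sum>x\<in>V. (a x - b x * r)\<^sup>2) = (\<Sum>x\<in>V. (a x)\<^sup>2) - 2 * r * (\<Sum>x\<in>V. b x * a x) + r\<^sup>2 * (\<Sum>x\<in>V. (b x)\<^sup>2)"
    by (simp add: power2_diff sum_subtractf sum.distrib sum_distrib_left algebra_simps power_mult_distrib)
  also have "\<dots> \<ge> (\<Sum>x\<in>V. (a x)\<^sup>2)" using assms by (simp add: sum_nonneg)
  finally show ?thesis .
qed

lemma key:
  fixes f :: "'a \<Rightarrow> complex" and z :: complex
  assumes nz: "\<exists>x\<in>V. f x \<noteq> 0"
    and orth: "(\<Sum>x\<in>V. complex_of_real (\<psi> x) * f x) = 0"
    and ev: "\<forall>x\<in>V. (\<Sum>y\<in>V. complex_of_real (hamiltonian V E W x y) * f y) = z * f x"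
  shows "z = complex_of_real (Re z) \<and> 1 / (2 * real (card V)^2) \<le> Re z - lam"
proof -
  define g where "g x = f x / complex_of_real (\<psi> x)" for x
  have fg: "f x = complex_of_real (\<psi> x) * g x" if "x \<in> V" for x
    using pos that unfolding g_def by auto
  have step1: "(z - complex_of_real lam) * f x
      = (\<Sum>y\<in>V. if E x y then complex_of_real (\<psi> y) * (g x - g y) else 0)" if x: "x \<in> V" for x
  proof -
    have r: "(real (Defs.degree V E x) + W x) * \<psi> x - (\<Sum>y\<in>V. if E x y then \<psi> y else 0) = lam * \<psi> x"
      using eig x H_apply_r[OF x, of \<psi>] by auto
    have r2: "complex_of_real ((real (Defs.degree V E x) + W x - lam) * \<psi> x) = (\<Sum>y\<in>V. if E x y then complex_of_real (\<psi> y) else 0)"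
    proof -
      have "(\<Sum>y\<in>V. if E x y then complex_of_real (\<psi> y) else 0) = complex_of_real (\<Sum>y\<in>V. if E x y then \<psi> y else 0)"
        unfolding of_real_sum by (intro sum.cong refl) auto
      also have "\<dots> = complex_of_real ((real (Defs.degree V E x) + W x - lam) * \<psi> x)"
        using r by (simp add: algebra_simps)
      finally show ?thesis by simp
    qed
    have "(z - complex_of_real lam) * f x
       = complex_of_real (real (Defs.degree V E x) + W x) * f x - (\<Sum>y\<in>V. if E x y then f y else 0) - complex_of_real lam * f x"
      using ev x H_apply_c[OF x, of f] by (simp add: algebra_simps)
    also have "\<dots> = complex_of_real ((real (Defs.degree V E x) + W x - lam) * \<psi> x) * g x - (\<Sum>y\<in>V. if E x y then complex_of_real (\<psi> y) * g y else 0)"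
      using fg x EV by (simp add: algebra_simps cong: if_cong)
    also have "\<dots> = (\<Sum>y\<in>V. if E x y then complex_of_real (\<psi> y) * (g x - g y) else 0)"
    proof -
      have e1: "(\<Sum>y\<in>V. if E x y then complex_of_real (\<psi> y) * (g x - g y) else 0) = (\<Sum>y\<in>V. if E x y then complex_of_real (\<psi> y) else 0) * g x - (\<Sum>y\<in>V. if E x y then complex_of_real (\<psi> y) * g y else 0)"
        unfolding sum_distrib_right sum_subtractf[symmetric] by (intro sum.cong refl) (auto simp: algebra_simps)
      show ?thesis unfolding e1 r2 by simp
    qed
    finally show ?thesis .
  qed
  define S where "S = (\<Sum>x\<in>V. (cmod (f x))\<^sup>2)"
  define D where "D = (\<Sum>u\<in>V. Dv g u)"
  define T where "T x y = (if E x y then complex_of_real (\<psi> x * \<psi> y) * (cnj (g x) * (g x - g y)) else 0)" for x y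
  have Spos: "S > 0"
  proof -
    from nz obtain x where "x \<in> V" "f x \<noteq> 0" by auto
    hence "(cmod (f x))\<^sup>2 \<le> S" unfolding S_def using finV by (intro member_le_sum) auto
    moreover have "(cmod (f x))\<^sup>2 > 0" using \<open>f x \<noteq> 0\<close> by simp
    ultimately show ?thesis by linarith
  qed
  have a: "(z - complex_of_real lam) * complex_of_real S = (\<Sum>x\<in>V. \<Sum>y\<in>V. T x y)"
  proof -
    have "(z - complex_of_real lam) * complex_of_real S = (\<Sum>x\<in>V. cnj (f x) * ((z - complex_of_real lam) * f x))"
      unfolding S_def of_real_sum sum_distrib_left complex_norm_square by (simp add: algebra_simps)
    also have "\<dots> = (\<Sum>x\<in>V. \<Sum>y\<in>V. T x y)"
    proof (intro sum.cong refl)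
      fix x assume x: "x \<in> V"
      show "cnj (f x) * ((z - complex_of_real lam) * f x) = (\<Sum>y\<in>V. T x y)"
        unfolding step1[OF x] sum_distrib_left T_def using fg[OF x]
        by (intro sum.cong refl) (simp add: algebra_simps)
    qed
    finally show ?thesis .
  qed
  have b: "(\<Sum>x\<in>V. \<Sum>y\<in>V. T x y) = (\<Sum>x\<in>V. \<Sum>y\<in>V. T y x)" by (rule sum.swap)
  have c: "T x y + T y x = complex_of_real (if E x y then \<psi> x * \<psi> y * (cmod (g x - g y))\<^sup>2 else 0)" for x y
  proof -
    have "E y x = E x y" using Esym by blast
    moreover have N: "(complex_of_real (cmod (g x - g y)))\<^sup>2 = g x * cnj (g x) + g y * cnj (g y) - g x * cnj (g y) - g y * cnj (g x)"
      using complex_norm_square[of "g x - g y"] by (simp add: algebra_simps)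
    ultimately show ?thesis unfolding T_def
      by (cases "E x y") (simp_all add: algebra_simps N)
  qed
  have "2 * (\<Sum>x\<in>V. \<Sum>y\<in>V. T x y) = (\<Sum>x\<in>V. \<Sum>y\<in>V. T x y + T y x)"
    using b by (simp add: sum.distrib)
  also have "\<dots> = complex_of_real D"
    unfolding c D_def Dv_def of_real_sum ..
  finally have "(z - complex_of_real lam) * complex_of_real S = complex_of_real (D / 2)"
    using a by (simp add: mult.commute)
  hence "z - complex_of_real lam = complex_of_real (D / 2) / complex_of_real S" using Spos
    by (simp add: eq_divide_eq mult_ac)
  hence zeq: "z = complex_of_real (lam + D / (2 * S))"
    by (simp add: of_real_divide[symmetric] del: of_real_divide) (metis add.commute diff_add_cancel)
  have Sle: "S \<le> real (card V) ^ 2 * D"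
  proof -
    have ne: "V \<noteq> {}" using card2 by auto
    have "Max (\<psi> ` V) \<in> \<psi> ` V" using finV ne by (intro Max_in) auto
    then obtain p where p0: "p \<in> V" "\<psi> p = Max (\<psi> ` V)" by auto
    hence p: "p \<in> V" "\<forall>y\<in>V. \<psi> y \<le> \<psi> p" using finV by auto
    define c where "c = g p"
    have "S = (\<Sum>x\<in>V. (Re (f x))\<^sup>2) + (\<Sum>x\<in>V. (Im (f x))\<^sup>2)"
      unfolding S_def cmod_power2 sum.distrib ..
    also have "\<dots> \<le> (\<Sum>x\<in>V. (Re (f x) - \<psi> x * Re c)\<^sup>2) + (\<Sum>x\<in>V. (Im (f x) - \<psi> x * Im c)\<^sup>2)"
    proof (intro add_mono sum_sq_shift)
      show "(\<Sum>x\<in>V. \<psi> x * Re (f x)) = 0" using arg_cong[OF orth, of Re] by (simp add: Re_sum)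
      show "(\<Sum>x\<in>V. \<psi> x * Im (f x)) = 0" using arg_cong[OF orth, of Im] by (simp add: Im_sum)
    qed
    also have "\<dots> = (\<Sum>x\<in>V. (\<psi> x)\<^sup>2 * (cmod (g x - g p))\<^sup>2)"
      unfolding sum.distrib[symmetric]
    proof (intro sum.cong refl)
      fix x assume x: "x \<in> V"
      have "f x - complex_of_real (\<psi> x) * c = complex_of_real (\<psi> x) * (g x - g p)"
        using fg[OF x] by (simp add: c_def algebra_simps)
      hence "(cmod (f x - complex_of_real (\<psi> x) * c))\<^sup>2 = (\<psi> x)\<^sup>2 * (cmod (g x - g p))\<^sup>2"
        by (simp add: norm_mult power_mult_distrib)
      thus "(Re (f x) - \<psi> x * Re c)\<^sup>2 + (Im (f x) - \<psi> x * Im c)\<^sup>2 = (\<psi> x)\<^sup>2 * (cmod (g x - g p))\<^sup>2"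
        unfolding cmod_power2 by simp
    qed
    also have "\<dots> \<le> (\<Sum>x\<in>V. real (card V) * D)"
      unfolding D_def by (intro sum_mono point_bound[OF p])
    also have "\<dots> = real (card V) ^ 2 * D" by (simp add: power2_eq_square)
    finally show ?thesis .
  qed
  have n0: "real (card V) > 0" using card2 by simp
  have Dpos: "D > 0"
  proof (rule ccontr)
    assume "\<not> D > 0"
    hence "real (card V) ^ 2 * D \<le> 0" by (simp add: mult_nonneg_nonpos)
    thus False using Sle Spos by linarith
  qed
  have "1 / (2 * real (card V)^2) \<le> D / (2 * S)"
    using Sle Spos Dpos n0 by (simp add: field_simps)
  thus ?thesis using zeq by simp
qed


lemma rowsum:
  "(\<Sum>x\<in>V. complex_of_real (\<psi> x) * (\<Sum>y\<in>V. complex_of_real (hamiltonian V E W x y) * f y))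
    = complex_of_real lam * (\<Sum>x\<in>V. complex_of_real (\<psi> x) * f x)"
proof -
  have eigc: "(\<Sum>x\<in>V. complex_of_real (hamiltonian V E W y x) * complex_of_real (\<psi> x)) = complex_of_real lam * complex_of_real (\<psi> y)"
    if y: "y \<in> V" for y
  proof -
    have "(\<Sum>x\<in>V. complex_of_real (hamiltonian V E W y x) * complex_of_real (\<psi> x))
        = complex_of_real (\<Sum>x\<in>V. hamiltonian V E W y x * \<psi> x)" by (simp add: of_real_sum)
    also have "\<dots> = complex_of_real lam * complex_of_real (\<psi> y)" using eig y by simp
    finally show ?thesis .
  qed
  have "(\<Sum>x\<in>V. complex_of_real (\<psi> x) * (\<Sum>y\<in>V. complex_of_real (hamiltonian V E W x y) * f y))
      = (\<Sum>x\<in>V. \<Sum>y\<in>V. complex_of_real (\<psi> x) * complex_of_real (hamiltonian V E W x y) * f y)"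
    by (simp add: sum_distrib_left mult.assoc)
  also have "\<dots> = (\<Sum>y\<in>V. \<Sum>x\<in>V. complex_of_real (\<psi> x) * complex_of_real (hamiltonian V E W x y) * f y)"
    by (rule sum.swap)
  also have "\<dots> = (\<Sum>y\<in>V. (\<Sum>x\<in>V. complex_of_real (hamiltonian V E W y x) * complex_of_real (\<psi> x)) * f y)"
    by (simp add: sum_distrib_left sum_distrib_right H_sym[of _ "_"] mult_ac)
  also have "\<dots> = (\<Sum>y\<in>V. complex_of_real lam * complex_of_real (\<psi> y) * f y)"
    by (intro sum.cong refl) (simp add: eigc)
  also have "\<dots> = complex_of_real lam * (\<Sum>x\<in>V. complex_of_real (\<psi> x) * f x)"
    by (simp add: sum_distrib_left mult.assoc)
  finally show ?thesis .
qed

end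


theorem proposition4:
  fixes V :: "'a set" and E :: "'a \<Rightarrow> 'a \<Rightarrow> bool"
    and W :: "'a \<Rightarrow> real" and \<psi> :: "'a \<Rightarrow> real"
  assumes "simple_graph V E"
    and "graph_connected V E"
    and "card V \<ge> 2"
    and "\<forall>x\<in>V. \<psi> x > 0"
    and "\<forall>x\<in>V. (\<Sum>y\<in>V. hamiltonian V E W x y * \<psi> y)
                = ground_energy V (hamiltonian V E W) * \<psi> x"
    and "single_peaked V E \<psi>"
  shows "spectral_gap V (hamiltonian V E W)
           \<ge> 1 / (2 * (potential_range V W + real (max_degree V E)) * real (card V) ^ 2)"
proof -
  define H where "H = hamiltonian V E W"
  define lam where "lam = ground_energy V H"
  interpret gs V E W \<psi> lam using assms unfolding lam_def H_def by unfold_locales auto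
  define n where "n = card V"
  define \<delta> where "\<delta> = 1 / (2 * real n ^ 2)"
  have n2: "n \<ge> 2" using assms(3) n_def by simp
  have \<delta>pos: "\<delta> > 0" using n2 unfolding \<delta>_def by simp
  obtain idx where bij: "bij_betw idx {..<n} V"
    using ex_bij_betw_nat_finite[OF finV] unfolding n_def lessThan_atLeast0 by blast
  define Sp where "Sp = op_spectrum V H"
  define XA where "XA = mat n n (\<lambda>(i,j). complex_of_real (H (idx i) (idx j)))"
  have XA: "XA \<in> carrier_mat n n" unfolding XA_def by simp
  have eigA: "eigenvalue XA z \<longleftrightarrow> (\<exists>f. (\<exists>x\<in>V. f x \<noteq> 0) \<and> (\<forall>x\<in>V. (\<Sum>y\<in>V. complex_of_real (H x y) * f y) = z * f x))" for z
    unfolding XA_def by (rule eig_trans[OF bij])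
  have Sp_iff: "e \<in> Sp \<longleftrightarrow> eigenvalue XA (complex_of_real e)" for e
    unfolding eigA Sp_def op_spectrum_def by simp
  have orth_case: "complex_of_real (Re z) = z \<and> Re z \<in> Sp \<and> lam + \<delta> \<le> Re z"
    if nz: "\<exists>x\<in>V. f x \<noteq> 0" and ev: "\<forall>x\<in>V. (\<Sum>y\<in>V. complex_of_real (H x y) * f y) = z * f x"
      and o: "(\<Sum>x\<in>V. complex_of_real (\<psi> x) * f x) = 0" for f z
  proof -
    from key[OF nz o] ev have k: "z = complex_of_real (Re z)" "1 / (2 * real (card V)^2) \<le> Re z - lam"
      unfolding H_def by auto
    have "Re z \<in> Sp" unfolding Sp_iff eigA using nz ev k(1) by (metis)
    thus ?thesis using k unfolding \<delta>_def n_def by auto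
  qed
  have orth_rel: "z * (\<Sum>x\<in>V. complex_of_real (\<psi> x) * f x) = complex_of_real lam * (\<Sum>x\<in>V. complex_of_real (\<psi> x) * f x)"
    if ev: "\<forall>x\<in>V. (\<Sum>y\<in>V. complex_of_real (H x y) * f y) = z * f x" for f z
  proof -
    have "z * (\<Sum>x\<in>V. complex_of_real (\<psi> x) * f x) = (\<Sum>x\<in>V. complex_of_real (\<psi> x) * (\<Sum>y\<in>V. complex_of_real (H x y) * f y))"
      using ev by (simp add: sum_distrib_left mult_ac)
    also have "\<dots> = complex_of_real lam * (\<Sum>x\<in>V. complex_of_real (\<psi> x) * f x)"
      unfolding H_def by (rule rowsum)
    finally show ?thesis .
  qed
  have lower: "lam + \<delta> \<le> e" if "e \<in> Sp" "e \<noteq> lam" for e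
  proof -
    from that(1) obtain f where nz: "\<exists>x\<in>V. f x \<noteq> 0" and ev: "\<forall>x\<in>V. (\<Sum>y\<in>V. complex_of_real (H x y) * f y) = complex_of_real e * f x"
      unfolding Sp_iff eigA by blast
    from orth_rel[OF ev] that(2) have "(\<Sum>x\<in>V. complex_of_real (\<psi> x) * f x) = 0" by simp
    from orth_case[OF nz ev this] show ?thesis by simp
  qed
  have finSp: "finite Sp"
  proof -
    have "Sp \<subseteq> Re ` Spectral_Radius.spectrum XA"
      unfolding Spectral_Radius.spectrum_def using Sp_iff by (auto intro!: image_eqI[where x = "complex_of_real _"])
    thus ?thesis using card_finite_spectrum(1)[OF XA] finite_surj by blast
  qed
  have other: "Sp - {lam} \<noteq> {}"
  proof
    assume none: "Sp - {lam} = {}"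
    have evA1: "\<And>z. eigenvalue XA z \<Longrightarrow> z = complex_of_real lam"
    proof -
      fix z assume "eigenvalue XA z"
      then obtain f where nz: "\<exists>x\<in>V. f x \<noteq> 0" and ev: "\<forall>x\<in>V. (\<Sum>y\<in>V. complex_of_real (H x y) * f y) = z * f x"
        unfolding eigA by blast
      show "z = complex_of_real lam"
      proof (cases "(\<Sum>x\<in>V. complex_of_real (\<psi> x) * f x) = 0")
        case True
        from orth_case[OF nz ev True] none \<delta>pos show ?thesis by auto
      next
        case False
        with orth_rel[OF ev] show ?thesis by simp
      qed
    qed
    have trA: "(\<Sum>x\<in>V. complex_of_real (H x x)) = of_nat n * complex_of_real lam"
    proof -
      have "mtrace XA = of_nat n * complex_of_real lam" by (rule trace_single_eigen[OF XA]) (rule evA1)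
      thus ?thesis using trace_trans[OF bij, of "\<lambda>x y. complex_of_real (H x y)"] unfolding XA_def by simp
    qed
    define s where "s = (\<Sum>x\<in>V. (\<psi> x)\<^sup>2)"
    have spos: "s > 0"
    proof -
      obtain x where "x \<in> V" using n2 n_def by fastforce
      hence "(\<psi> x)\<^sup>2 \<le> s" "(\<psi> x)\<^sup>2 > 0" unfolding s_def using finV pos by (auto intro!: member_le_sum)
      thus ?thesis by linarith
    qed
    define XB where "XB = mat n n (\<lambda>(i,j). complex_of_real (H (idx i) (idx j) + \<psi> (idx i) * \<psi> (idx j)))"
    have XB: "XB \<in> carrier_mat n n" unfolding XB_def by simp
    have evB1: "\<And>z. eigenvalue XB z \<Longrightarrow> z = complex_of_real (lam + s)"
    proof -
      fix z assume "eigenvalue XB z"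
      then obtain f where nz: "\<exists>x\<in>V. f x \<noteq> 0"
        and ev: "\<forall>x\<in>V. (\<Sum>y\<in>V. complex_of_real (H x y + \<psi> x * \<psi> y) * f y) = z * f x"
        unfolding XB_def eig_trans[OF bij, of "\<lambda>x y. complex_of_real (H x y + \<psi> x * \<psi> y)"] by auto
      define t where "t = (\<Sum>x\<in>V. complex_of_real (\<psi> x) * f x)"
      have evA: "\<forall>x\<in>V. (\<Sum>y\<in>V. complex_of_real (H x y) * f y) = z * f x - complex_of_real (\<psi> x) * t"
      proof
        fix x assume x: "x \<in> V"
        have "(\<Sum>y\<in>V. complex_of_real (H x y + \<psi> x * \<psi> y) * f y)
           = (\<Sum>y\<in>V. complex_of_real (H x y) * f y) + complex_of_real (\<psi> x) * t"
          unfolding t_def by (simp add: sum.distrib sum_distrib_left algebra_simps)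
        thus "(\<Sum>y\<in>V. complex_of_real (H x y) * f y) = z * f x - complex_of_real (\<psi> x) * t"
          using ev x by simp
      qed
      have "(\<Sum>x\<in>V. complex_of_real (\<psi> x) * (\<Sum>y\<in>V. complex_of_real (H x y) * f y))
          = (\<Sum>x\<in>V. complex_of_real (\<psi> x) * (z * f x - complex_of_real (\<psi> x) * t))"
        using evA by (intro sum.cong refl) auto
      also have "\<dots> = z * t - complex_of_real s * t"
        unfolding t_def s_def
        by (simp add: algebra_simps sum_subtractf sum_distrib_left sum_distrib_right of_real_sum power2_eq_square)
      finally have "complex_of_real lam * t = z * t - complex_of_real s * t"
        unfolding H_def rowsum t_def .
      hence tz: "(z - complex_of_real (lam + s)) * t = 0" by (simp add: algebra_simps)
      show "z = complex_of_real (lam + s)"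
      proof (cases "t = 0")
        case True
        hence ev': "\<forall>x\<in>V. (\<Sum>y\<in>V. complex_of_real (H x y) * f y) = z * f x" using evA by simp
        from orth_case[OF nz ev' True[unfolded t_def]] none \<delta>pos show ?thesis by auto
      next
        case False
        with tz show ?thesis by simp
      qed
    qed
    have trB: "(\<Sum>x\<in>V. complex_of_real (H x x + \<psi> x * \<psi> x)) = of_nat n * complex_of_real (lam + s)"
    proof -
      have "mtrace XB = of_nat n * complex_of_real (lam + s)" by (rule trace_single_eigen[OF XB]) (rule evB1)
      thus ?thesis using trace_trans[OF bij, of "\<lambda>x y. complex_of_real (H x y + \<psi> x * \<psi> y)"] unfolding XB_def by simp
    qed
    have "(\<Sum>x\<in>V. complex_of_real (H x x + \<psi> x * \<psi> x)) = (\<Sum>x\<in>V. complex_of_real (H x x)) + complex_of_real s"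
      unfolding s_def by (simp add: sum.distrib of_real_sum power2_eq_square)
    with trA trB have "of_nat n * complex_of_real lam + complex_of_real s = of_nat n * complex_of_real (lam + s)"
      by simp
    hence "complex_of_real ((real n - 1) * s) = 0" by (simp add: algebra_simps)
    hence "(real n - 1) * s = 0" by (simp only: of_real_eq_0_iff)
    thus False using spos n2 by simp
  qed
  have gap: "lam + \<delta> \<le> Min (Sp - {lam})"
    using finSp other lower by (subst Min_ge_iff) auto
  have Vne: "V \<noteq> {}" using n2 n_def by auto
  have R: "potential_range V W \<ge> 0"
  proof -
    obtain x where x: "x \<in> V" using Vne by auto
    have "Min (W ` V) \<le> W x" "W x \<le> Max (W ` V)" using x finV by auto
    thus ?thesis unfolding potential_range_def by simp
  qed
  have dm: "real (max_degree V E) \<ge> 1"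
  proof -
    obtain x where x: "x \<in> V" using Vne by auto
    have "card (V - {x}) \<ge> 1" using n2 x finV unfolding n_def by (simp add: card_Diff_singleton)
    hence "V - {x} \<noteq> {}" by (metis card.empty not_one_le_zero)
    then obtain y where y: "y \<in> V" "y \<noteq> x" by auto
    have "(\<lambda>u v. u \<in> V \<and> v \<in> V \<and> E u v)\<^sup>*\<^sup>* x y"
      using conn x y unfolding graph_connected_def induces_connected_def by auto
    then obtain w where "E x w" using y(2) by (auto elim: converse_rtranclpE)
    hence wV: "w \<in> {y \<in> V. E x y}" using EV by auto
    have "finite {y \<in> V. E x y}" using finV by auto
    hence "0 < Defs.degree V E x" unfolding Defs.degree_def using wV by (subst card_gt_0_iff) auto
    also have "Defs.degree V E x \<le> max_degree V E" unfolding max_degree_def using finV x by auto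
    finally have "0 < max_degree V E" .
    thus ?thesis by simp
  qed
  have "1 / (2 * (potential_range V W + real (max_degree V E)) * real (card V) ^ 2) \<le> \<delta>"
    unfolding \<delta>_def n_def using R dm n2 n_def
    by (intro divide_left_mono mult_right_mono mult_pos_pos) auto
  also have "\<delta> \<le> spectral_gap V (hamiltonian V E W)"
    unfolding spectral_gap_def H_def[symmetric] lam_def[symmetric] Sp_def[symmetric] using gap by simp
  finally show ?thesis .
qed

end
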